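(* Let $H:\mathbb R_+\to(0,1)$ be continuous and satisfy: (H1) there are constants $0<h_1<h_2<1$ with $h_1\le H_t\le h_2$ for all $t\ge0$; (H2) there are constants $D>0$, $\kappa\in(0,1]$ with $|H_t-H_s|\le D|t-s|^\kappa$ for all $t\ge s>0$. Let $Y$ be the multifractional Brownian motion with Hurst function $H$. Let $z(s)=s^{h_2}(\log^2s+1)^{1/2}$ for $s\ge1$ and $z(s)=1$ for $0\le s<1$, and let $K_2>0$ be a constant such that $\mathbb E(Y(t)-Y(s))^2\le K_2|t-s|^{2H_t}+K_2(H_t-H_s)^2z^2(s)$ for all $t\ge s\ge0$. Put $K_3=K_2^{1/2}(1+D^2)^{1/2}$, $h_3=\min\{h_1,\kappa\}$, $h_4=\max\{h_2,\kappa\}$, $h_5=h_4-h_3$. Let $a,b\in\mathbb R_+$ with $b-a\ge1$. Then: (a) for all $t,s\in[a,b]$ with $|t-s|\le1$, $\left(\mathbb E(Y(t)-Y(s))^2\right)^{1/2}\le K_3|t-s|^{h_3}z(b)$; (b) for all $t,s\in[a,b]$, $\left(\mathbb E(Y(t)-Y(s))^2\right)^{1/2}\le K_3|t-s|^{h_3}(b-a)^{h_5}z(b)$; (c) for all $t_1,t_2,s_1,s_2\in[a,b]$, \[ \left(\mathbb E(Y(t_1)-Y(t_2)-Y(s_1)+Y(s_2))^2\right)^{1/2}\le 2K_3\max(|t_1-s_1|,|t_2-s_2|)^{h_3}(b-a)^{h_5}z(b). \]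
   Context: The (harmonizable) multifractional Brownian motion with continuous functional parameter $H$ is $Y(t)=\int_{\mathbb R}\frac{e^{itu}-1}{|u|^{H_t+1/2}}\widetilde W(du)$, $t\ge0$, where $\widetilde W$ is the Fourier transform of real Gaussian white noise $W$ (the unique complex-valued random measure with $\int f\,dW=\int\widehat f\,d\widetilde W$ a.s. for all $f\in L^2(\mathbb R)$). Such a constant $K_2$ exists. *)

theory Defs
  imports "HOL-Probability.Probability"
begin

text \<open>Harmonizable kernel of the multifractional Brownian motion:
  u |-> (e^{itu} - 1) / |u|^{H_t + 1/2}  (set to 0 at u = 0, a null set).\<close>
definition mbm_kernel :: "(real \<Rightarrow> real) \<Rightarrow> real \<Rightarrow> real \<Rightarrow> complex" where
  "mbm_kernel H t u =
     (if u = 0 then 0 else (cis (t * u) - 1) / complex_of_real (\<bar>u\<bar> powr (H t + 1/2)))"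

text \<open>Covariance of the harmonizable mBm (Fourier transform normalised unitarily, so the
  control measure of the Fourier transformed white noise is Lebesgue measure):
  E[Y(t) Y(s)] = Re \<integral> k_t(u) conj(k_s(u)) du.\<close>
definition mbm_cov :: "(real \<Rightarrow> real) \<Rightarrow> real \<Rightarrow> real \<Rightarrow> real" where
  "mbm_cov H t s = Re (LINT u|lborel. mbm_kernel H t u * cnj (mbm_kernel H s u))"

text \<open>Y is (a version of) the multifractional Brownian motion with functional parameter H
  on the probability space M, indexed by t \<ge> 0: a centered real Gaussian process (every finite
  linear combination is centered normal, possibly degenerate, expressed via its characteristic
  function) with the covariance of the harmonizable representation.\<close>
definition is_mbm :: "'a measure \<Rightarrow> (real \<Rightarrow> real) \<Rightarrow> (real \<Rightarrow> 'a \<Rightarrow> real) \<Rightarrow> bool" where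
  "is_mbm M H Y \<longleftrightarrow>
     (\<forall>t\<ge>0. Y t \<in> borel_measurable M \<and> integrable M (\<lambda>\<omega>. (Y t \<omega>)\<^sup>2)
             \<and> (LINT \<omega>|M. Y t \<omega>) = 0) \<and>
     (\<forall>t\<ge>0. \<forall>s\<ge>0. (LINT \<omega>|M. Y t \<omega> * Y s \<omega>) = mbm_cov H t s) \<and>
     (\<forall>F c \<theta>. finite F \<longrightarrow> F \<subseteq> {0..} \<longrightarrow>
        char (distr M borel (\<lambda>\<omega>. \<Sum>t\<in>F. c t * Y t \<omega>)) \<theta> =
        exp (- complex_of_real ((LINT \<omega>|M. (\<Sum>t\<in>F. c t * Y t \<omega>)\<^sup>2) * \<theta>\<^sup>2 / 2)))"

definition zfun :: "real \<Rightarrow> real \<Rightarrow> real" where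
  "zfun h2 s = (if s \<ge> 1 then s powr h2 * sqrt ((ln s)\<^sup>2 + 1) else 1)"

end

theory Submission
  imports Defs
begin

lemma Hlip0:
  fixes H :: "real \<Rightarrow> real"
  assumes Hcont: "continuous_on {0..} H"
    and lip: "\<forall>t s. s > 0 \<and> t \<ge> s \<longrightarrow> \<bar>H t - H s\<bar> \<le> D * \<bar>t - s\<bar> powr \<kappa>"
    and s: "0 \<le> s" "s \<le> t"
  shows "\<bar>H t - H s\<bar> \<le> D * (t - s) powr \<kappa>"
proof (cases "s > 0")
  case True then show ?thesis using lip s by auto
next
  case False
  then have s0: "s = 0" using s by auto
  show ?thesis
  proof (cases "t = 0")
    case True then show ?thesis using s0 by simp
  next
    case False
    then have tpos: "t > 0" using s s0 by auto
    have "(H \<longlongrightarrow> H 0) (at 0 within {0..})"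
      using Hcont by (simp add: continuous_on_def)
    then have "(H \<longlongrightarrow> H 0) (at_right 0)"
      by (rule tendsto_within_subset) auto
    then have L1: "((\<lambda>x. \<bar>H t - H x\<bar>) \<longlongrightarrow> \<bar>H t - H 0\<bar>) (at_right 0)"
      by (intro tendsto_intros)
    have "((\<lambda>x. (t - x) powr \<kappa>) \<longlongrightarrow> (t - 0) powr \<kappa>) (at_right 0)"
    proof (rule tendsto_powr)
      have "((\<lambda>x. t - x) \<longlongrightarrow> t - 0) (at_right 0)" by (intro tendsto_intros)
      then show "((-) t \<longlongrightarrow> t - 0) (at_right 0)" by simp
    qed (use tpos in auto)
    then have L2: "((\<lambda>x. D * (t - x) powr \<kappa>) \<longlongrightarrow> D * t powr \<kappa>) (at_right 0)"
      by (auto intro!: tendsto_intros)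
    have ev: "\<forall>\<^sub>F x in at_right 0. \<bar>H t - H x\<bar> \<le> D * (t - x) powr \<kappa>"
      using eventually_at_right_real[OF tpos]
      by eventually_elim (use lip in auto)
    have "\<bar>H t - H 0\<bar> \<le> D * t powr \<kappa>"
      by (rule tendsto_le[OF _ L2 L1 ev]) simp
    then show ?thesis using s0 by simp
  qed
qed

lemma zfun_ge1: "0 \<le> h2 \<Longrightarrow> 1 \<le> zfun h2 s"
proof -
  assume h: "0 \<le> h2"
  show ?thesis
  proof (cases "s \<ge> 1")
    case True
    have a: "1 \<le> s powr h2" using True h by (rule ge_one_powr_ge_zero)
    have b: "1 \<le> sqrt ((ln s)\<^sup>2 + 1)" by simp
    have "1 * 1 \<le> s powr h2 * sqrt ((ln s)\<^sup>2 + 1)"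
      using a b by (intro mult_mono) auto
    then show ?thesis using True by (simp add: zfun_def)
  qed (simp add: zfun_def)
qed

lemma zfun_mono: "0 \<le> h2 \<Longrightarrow> s \<le> b \<Longrightarrow> zfun h2 s \<le> zfun h2 b"
proof -
  assume h: "0 \<le> h2" and sb: "s \<le> b"
  show ?thesis
  proof (cases "s \<ge> 1")
    case True
    then have b1: "b \<ge> 1" using sb by auto
    have a: "s powr h2 \<le> b powr h2" using True sb h by (intro powr_mono2) auto
    have l: "0 \<le> ln s" "ln s \<le> ln b" using True sb by auto
    have "(ln s)\<^sup>2 \<le> (ln b)\<^sup>2" using l by (intro power_mono) auto
    then have c: "sqrt ((ln s)\<^sup>2 + 1) \<le> sqrt ((ln b)\<^sup>2 + 1)" by simp
    have "s powr h2 * sqrt ((ln s)\<^sup>2 + 1) \<le> b powr h2 * sqrt ((ln b)\<^sup>2 + 1)"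
      using a c by (intro mult_mono) auto
    then show ?thesis using True b1 by (simp add: zfun_def)
  next
    case False
    then show ?thesis using zfun_ge1[OF h, of b] by (simp add: zfun_def)
  qed
qed

lemma sqdiff_le:
  fixes x y :: real
  shows "norm ((x - y)\<^sup>2) \<le> norm (2 * x\<^sup>2 + 2 * y\<^sup>2)"
proof -
  have e: "(x - y)\<^sup>2 + (x + y)\<^sup>2 = 2 * x\<^sup>2 + 2 * y\<^sup>2"
    by (simp add: power2_eq_square algebra_simps)
  have "0 \<le> (x + y)\<^sup>2" by simp
  then have "(x - y)\<^sup>2 \<le> 2 * x\<^sup>2 + 2 * y\<^sup>2" using e by linarith
  moreover have "0 \<le> 2 * x\<^sup>2 + 2 * y\<^sup>2" by simp
  ultimately show ?thesis by simp
qed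

lemma sqrt_le_imp: fixes x c :: real assumes "sqrt x \<le> c" shows "x \<le> c\<^sup>2"
proof (cases "x \<ge> 0")
  case True
  have "0 \<le> sqrt x" using True by simp
  then have "(sqrt x)\<^sup>2 \<le> c\<^sup>2" using assms by (intro power_mono) auto
  then show ?thesis using True by simp
next
  case False
  then show ?thesis by (smt (verit) zero_le_power2)
qed

lemma keybound:
  fixes d e h3 h4 L :: real
  assumes "0 \<le> d" "h3 \<le> e" "e \<le> h4" "1 \<le> L" "d \<le> L"
  shows "d powr e \<le> (if d \<le> 1 then d powr h3 else d powr h3 * L powr (h4 - h3))"
proof (cases "d \<le> 1")
  case True then show ?thesis using assms by (simp add: powr_mono')
next
  case False
  have "d powr e \<le> d powr h4" using False assms by (intro powr_mono) auto
  also have "\<dots> = d powr h3 * d powr (h4 - h3)" by (simp add: powr_add[symmetric])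
  also have "\<dots> \<le> d powr h3 * L powr (h4 - h3)"
    using assms False by (intro mult_left_mono powr_mono2) auto
  finally show ?thesis using False by simp
qed


theorem lemma2:
  fixes M :: "'a measure" and H :: "real \<Rightarrow> real" and Y :: "real \<Rightarrow> 'a \<Rightarrow> real"
    and h1 h2 D \<kappa> K2 a b :: real
  assumes Hcont: "continuous_on {0..} H"
    and Hrange: "\<forall>t\<ge>0. 0 < H t \<and> H t < 1"
    and H1: "0 < h1" "h1 < h2" "h2 < 1" "\<forall>t\<ge>0. h1 \<le> H t \<and> H t \<le> h2"
    and H2: "D > 0" "0 < \<kappa>" "\<kappa> \<le> 1"
            "\<forall>t s. s > 0 \<and> t \<ge> s \<longrightarrow> \<bar>H t - H s\<bar> \<le> D * \<bar>t - s\<bar> powr \<kappa>"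
    and P: "prob_space M"
    and Ymbm: "is_mbm M H Y"
    and K2: "K2 > 0"
            "\<forall>t s. s \<ge> 0 \<and> t \<ge> s \<longrightarrow>
               (LINT \<omega>|M. (Y t \<omega> - Y s \<omega>)\<^sup>2)
                 \<le> K2 * \<bar>t - s\<bar> powr (2 * H t) + K2 * (H t - H s)\<^sup>2 * (zfun h2 s)\<^sup>2"
    and ab: "a \<ge> 0" "b - a \<ge> 1"
  shows
    "(\<forall>t\<in>{a..b}. \<forall>s\<in>{a..b}. \<bar>t - s\<bar> \<le> 1 \<longrightarrow>
        sqrt (LINT \<omega>|M. (Y t \<omega> - Y s \<omega>)\<^sup>2)
          \<le> sqrt K2 * sqrt (1 + D\<^sup>2) * \<bar>t - s\<bar> powr (min h1 \<kappa>) * zfun h2 b)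
   \<and> (\<forall>t\<in>{a..b}. \<forall>s\<in>{a..b}.
        sqrt (LINT \<omega>|M. (Y t \<omega> - Y s \<omega>)\<^sup>2)
          \<le> sqrt K2 * sqrt (1 + D\<^sup>2) * \<bar>t - s\<bar> powr (min h1 \<kappa>)
             * (b - a) powr (max h2 \<kappa> - min h1 \<kappa>) * zfun h2 b)
   \<and> (\<forall>t1\<in>{a..b}. \<forall>t2\<in>{a..b}. \<forall>s1\<in>{a..b}. \<forall>s2\<in>{a..b}.
        sqrt (LINT \<omega>|M. (Y t1 \<omega> - Y t2 \<omega> - Y s1 \<omega> + Y s2 \<omega>)\<^sup>2)
          \<le> 2 * (sqrt K2 * sqrt (1 + D\<^sup>2)) * (max \<bar>t1 - s1\<bar> \<bar>t2 - s2\<bar>) powr (min h1 \<kappa>)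
             * (b - a) powr (max h2 \<kappa> - min h1 \<kappa>) * zfun h2 b)"
proof -
  define h3 where "h3 = min h1 \<kappa>"
  define h4 where "h4 = max h2 \<kappa>"
  define L where "L = b - a"
  define G where "G = (\<lambda>d::real. if d \<le> 1 then d powr h3 else d powr h3 * L powr (h4 - h3))"
  define K3 where "K3 = sqrt K2 * sqrt (1 + D\<^sup>2)"
  define E where "E = (\<lambda>t s. LINT \<omega>|M. (Y t \<omega> - Y s \<omega>)\<^sup>2)"
  have L1: "1 \<le> L" using ab by (simp add: L_def)
  have h2pos: "0 \<le> h2" using H1 by simp
  have K3nn: "0 \<le> K3" using K2(1) by (simp add: K3_def)
  have zb1: "1 \<le> zfun h2 b" using zfun_ge1[OF h2pos] .
  have Gnn: "\<And>d. 0 \<le> G d" by (simp add: G_def)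
  have Esym: "\<And>t s. E t s = E s t"
    unfolding E_def by (simp add: power2_commute)
  have core0: "E t s \<le> (K3 * G \<bar>t - s\<bar> * zfun h2 b)\<^sup>2"
    if st: "a \<le> s" "s \<le> t" "t \<le> b" for t s
  proof -
    define d where "d = t - s"
    have d0: "0 \<le> d" "d \<le> L" using st by (auto simp: d_def L_def)
    have Ht: "h1 \<le> H t" "H t \<le> h2" using H1(4) st ab by auto
    have g1: "d powr H t \<le> G d"
      unfolding G_def using d0 Ht L1 by (intro keybound) (auto simp: h3_def h4_def)
    have g2: "d powr \<kappa> \<le> G d"
      unfolding G_def using d0 L1 by (intro keybound) (auto simp: h3_def h4_def)
    have lip: "\<bar>H t - H s\<bar> \<le> D * d powr \<kappa>"
      unfolding d_def by (rule Hlip0[OF Hcont H2(4)]) (use st ab in auto)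
    have e1: "d powr (2 * H t) \<le> (G d)\<^sup>2"
    proof -
      have "d powr (2 * H t) = d powr (H t + H t)" by (simp only: mult_2)
      also have "\<dots> = d powr H t * d powr H t" by (rule powr_add)
      also have "\<dots> = (d powr H t)\<^sup>2" by (simp add: power2_eq_square)
      also have "\<dots> \<le> (G d)\<^sup>2" using g1 by (intro power_mono) auto
      finally show ?thesis .
    qed
    have e2: "(H t - H s)\<^sup>2 \<le> D\<^sup>2 * (G d)\<^sup>2"
    proof -
      have "\<bar>H t - H s\<bar> \<le> D * G d"
        using lip g2 H2(1) by (meson less_le mult_left_mono order_trans)
      then have "\<bar>H t - H s\<bar>\<^sup>2 \<le> (D * G d)\<^sup>2" by (intro power_mono) auto
      then show ?thesis by (simp add: power_mult_distrib)
    qed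
    have zs: "(zfun h2 s)\<^sup>2 \<le> (zfun h2 b)\<^sup>2"
      using zfun_mono[OF h2pos, of s b] zfun_ge1[OF h2pos, of s] st
      by (intro power_mono) auto
    have "E t s \<le> K2 * \<bar>t - s\<bar> powr (2 * H t) + K2 * (H t - H s)\<^sup>2 * (zfun h2 s)\<^sup>2"
      unfolding E_def using K2(2) st ab by auto
    also have "\<dots> \<le> K2 * (G d)\<^sup>2 + K2 * (D\<^sup>2 * (G d)\<^sup>2) * (zfun h2 b)\<^sup>2"
    proof (rule add_mono)
      have "\<bar>t - s\<bar> = d" using d0 by (simp add: d_def)
      then show "K2 * \<bar>t - s\<bar> powr (2 * H t) \<le> K2 * (G d)\<^sup>2"
        using e1 K2(1) by (simp add: mult_left_mono)
      have "K2 * (H t - H s)\<^sup>2 \<le> K2 * (D\<^sup>2 * (G d)\<^sup>2)"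
        using e2 K2(1) by (simp add: mult_left_mono)
      then show "K2 * (H t - H s)\<^sup>2 * (zfun h2 s)\<^sup>2 \<le> K2 * (D\<^sup>2 * (G d)\<^sup>2) * (zfun h2 b)\<^sup>2"
        using zs K2(1) by (intro mult_mono) auto
    qed
    also have "\<dots> \<le> K2 * (G d)\<^sup>2 * (zfun h2 b)\<^sup>2 + K2 * (D\<^sup>2 * (G d)\<^sup>2) * (zfun h2 b)\<^sup>2"
    proof -
      have "1 \<le> (zfun h2 b)\<^sup>2" using zb1 by (simp add: one_le_power)
      then have "K2 * (G d)\<^sup>2 * 1 \<le> K2 * (G d)\<^sup>2 * (zfun h2 b)\<^sup>2"
        using K2(1) by (intro mult_left_mono) auto
      then show ?thesis by simp
    qed
    also have "\<dots> = (K3 * G \<bar>t - s\<bar> * zfun h2 b)\<^sup>2"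
      using K2(1) d0 unfolding K3_def d_def
      by (simp add: power_mult_distrib algebra_simps)
    finally show ?thesis .
  qed
  have core: "E t s \<le> (K3 * G \<bar>t - s\<bar> * zfun h2 b)\<^sup>2"
    if "t \<in> {a..b}" "s \<in> {a..b}" for t s
  proof (cases "s \<le> t")
    case True then show ?thesis using core0 that by auto
  next
    case False
    then have "E s t \<le> (K3 * G \<bar>s - t\<bar> * zfun h2 b)\<^sup>2" using core0 that by auto
    then show ?thesis by (simp add: Esym abs_minus_commute)
  qed
  have sq: "sqrt (E t s) \<le> K3 * G \<bar>t - s\<bar> * zfun h2 b"
    if "t \<in> {a..b}" "s \<in> {a..b}" for t s
  proof -
    have "sqrt (E t s) \<le> sqrt ((K3 * G \<bar>t - s\<bar> * zfun h2 b)\<^sup>2)"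
      using core[OF that] by (rule real_sqrt_le_mono)
    also have "\<dots> = K3 * G \<bar>t - s\<bar> * zfun h2 b"
      using K3nn Gnn zb1 by simp
    finally show ?thesis .
  qed
  have Gle: "G d \<le> d powr h3 * L powr (h4 - h3)" if "0 \<le> d" for d
  proof (cases "d \<le> 1")
    case True
    have "1 \<le> L powr (h4 - h3)" using L1 by (intro ge_one_powr_ge_zero) (auto simp: h3_def h4_def)
    then have "d powr h3 * 1 \<le> d powr h3 * L powr (h4 - h3)" by (intro mult_left_mono) auto
    then show ?thesis using True by (simp add: G_def)
  qed (simp add: G_def)
  have sqb: "sqrt (E t s) \<le> K3 * (\<bar>t - s\<bar> powr h3 * L powr (h4 - h3)) * zfun h2 b"
    if "t \<in> {a..b}" "s \<in> {a..b}" for t s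
  proof -
    have "K3 * G \<bar>t - s\<bar> \<le> K3 * (\<bar>t - s\<bar> powr h3 * L powr (h4 - h3))"
      using Gle[of "\<bar>t - s\<bar>"] K3nn by (intro mult_left_mono) auto
    then have "K3 * G \<bar>t - s\<bar> * zfun h2 b \<le> K3 * (\<bar>t - s\<bar> powr h3 * L powr (h4 - h3)) * zfun h2 b"
      using zb1 by (intro mult_right_mono) auto
    then show ?thesis using sq[OF that] by linarith
  qed
  have partA: "\<forall>t\<in>{a..b}. \<forall>s\<in>{a..b}. \<bar>t - s\<bar> \<le> 1 \<longrightarrow>
        sqrt (E t s) \<le> K3 * \<bar>t - s\<bar> powr h3 * zfun h2 b"
  proof (intro ballI impI)
    fix t s assume "t \<in> {a..b}" "s \<in> {a..b}" "\<bar>t - s\<bar> \<le> 1"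
    then show "sqrt (E t s) \<le> K3 * \<bar>t - s\<bar> powr h3 * zfun h2 b"
      using sq[of t s] by (simp add: G_def)
  qed
  have partB: "\<forall>t\<in>{a..b}. \<forall>s\<in>{a..b}.
        sqrt (E t s) \<le> K3 * \<bar>t - s\<bar> powr h3 * L powr (h4 - h3) * zfun h2 b"
    using sqb by (simp add: mult.assoc)
  have partC: "sqrt (LINT \<omega>|M. (Y t1 \<omega> - Y t2 \<omega> - Y s1 \<omega> + Y s2 \<omega>)\<^sup>2)
      \<le> 2 * K3 * (max \<bar>t1 - s1\<bar> \<bar>t2 - s2\<bar>) powr h3 * L powr (h4 - h3) * zfun h2 b"
    if T: "t1 \<in> {a..b}" "t2 \<in> {a..b}" "s1 \<in> {a..b}" "s2 \<in> {a..b}" for t1 t2 s1 s2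
  proof -
    define C where "C = K3 * (max \<bar>t1 - s1\<bar> \<bar>t2 - s2\<bar>) powr h3 * L powr (h4 - h3) * zfun h2 b"
    have C0: "0 \<le> C" using K3nn zb1 by (simp add: C_def)
    have Cb: "sqrt (E t s) \<le> C" if "t \<in> {a..b}" "s \<in> {a..b}"
      "\<bar>t - s\<bar> \<le> max \<bar>t1 - s1\<bar> \<bar>t2 - s2\<bar>" for t s
    proof -
      have "\<bar>t - s\<bar> powr h3 \<le> (max \<bar>t1 - s1\<bar> \<bar>t2 - s2\<bar>) powr h3"
        using that(3) H1(1) H2(2) by (intro powr_mono2) (auto simp: h3_def)
      then have "K3 * (\<bar>t - s\<bar> powr h3 * L powr (h4 - h3)) * zfun h2 b \<le> C"
      proof -
        assume hh: "\<bar>t - s\<bar> powr h3 \<le> (max \<bar>t1 - s1\<bar> \<bar>t2 - s2\<bar>) powr h3"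
        have "\<bar>t - s\<bar> powr h3 * L powr (h4 - h3) \<le> (max \<bar>t1 - s1\<bar> \<bar>t2 - s2\<bar>) powr h3 * L powr (h4 - h3)"
          using hh by (intro mult_right_mono) auto
        then have "K3 * (\<bar>t - s\<bar> powr h3 * L powr (h4 - h3)) \<le> K3 * ((max \<bar>t1 - s1\<bar> \<bar>t2 - s2\<bar>) powr h3 * L powr (h4 - h3))"
          using K3nn by (intro mult_left_mono) auto
        then have "K3 * (\<bar>t - s\<bar> powr h3 * L powr (h4 - h3)) * zfun h2 b \<le> K3 * ((max \<bar>t1 - s1\<bar> \<bar>t2 - s2\<bar>) powr h3 * L powr (h4 - h3)) * zfun h2 b"
          using zb1 by (intro mult_right_mono) auto
        then show ?thesis by (simp add: C_def mult.assoc)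
      qed
      then show ?thesis using sqb[OF that(1,2)] by linarith
    qed
    have A: "E t1 s1 \<le> C\<^sup>2"
    proof -
      have "sqrt (E t1 s1) \<le> C" using Cb T by auto
      then show ?thesis by (rule sqrt_le_imp)
    qed
    have B: "E t2 s2 \<le> C\<^sup>2"
    proof -
      have "sqrt (E t2 s2) \<le> C" using Cb T by auto
      then show ?thesis by (rule sqrt_le_imp)
    qed
    interpret prob_space M by (rule P)
    have Ymeas: "\<And>t. t \<ge> 0 \<Longrightarrow> Y t \<in> borel_measurable M"
      and Yint: "\<And>t. t \<ge> 0 \<Longrightarrow> integrable M (\<lambda>\<omega>. (Y t \<omega>)\<^sup>2)"
      using Ymbm by (auto simp: is_mbm_def)
    have dint: "integrable M (\<lambda>\<omega>. (Y t \<omega> - Y s \<omega>)\<^sup>2)" if "t \<ge> 0" "s \<ge> 0" for t s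
    proof (rule Bochner_Integration.integrable_bound)
      show "integrable M (\<lambda>\<omega>. 2 * (Y t \<omega>)\<^sup>2 + 2 * (Y s \<omega>)\<^sup>2)"
        using Yint that by auto
      show "(\<lambda>\<omega>. (Y t \<omega> - Y s \<omega>)\<^sup>2) \<in> borel_measurable M"
        using Ymeas that by measurable
      show "AE \<omega> in M. norm ((Y t \<omega> - Y s \<omega>)\<^sup>2) \<le> norm (2 * (Y t \<omega>)\<^sup>2 + 2 * (Y s \<omega>)\<^sup>2)"
        by (intro AE_I2) (rule sqdiff_le)
    qed
    have nn: "t \<ge> 0" if "t \<in> {a..b}" for t using that ab by auto
    have "(LINT \<omega>|M. (Y t1 \<omega> - Y t2 \<omega> - Y s1 \<omega> + Y s2 \<omega>)\<^sup>2)
        \<le> (LINT \<omega>|M. 2 * (Y t1 \<omega> - Y s1 \<omega>)\<^sup>2 + 2 * (Y t2 \<omega> - Y s2 \<omega>)\<^sup>2)"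
    proof (rule integral_mono)
      show "integrable M (\<lambda>\<omega>. 2 * (Y t1 \<omega> - Y s1 \<omega>)\<^sup>2 + 2 * (Y t2 \<omega> - Y s2 \<omega>)\<^sup>2)"
        using dint nn T by auto
      show "integrable M (\<lambda>\<omega>. (Y t1 \<omega> - Y t2 \<omega> - Y s1 \<omega> + Y s2 \<omega>)\<^sup>2)"
      proof -
        have "integrable M (\<lambda>\<omega>. ((Y t1 \<omega> - Y s1 \<omega>) - (Y t2 \<omega> - Y s2 \<omega>))\<^sup>2)"
        proof (rule Bochner_Integration.integrable_bound)
          show "integrable M (\<lambda>\<omega>. 2 * (Y t1 \<omega> - Y s1 \<omega>)\<^sup>2 + 2 * (Y t2 \<omega> - Y s2 \<omega>)\<^sup>2)"
            using dint nn T by auto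
          show "(\<lambda>\<omega>. ((Y t1 \<omega> - Y s1 \<omega>) - (Y t2 \<omega> - Y s2 \<omega>))\<^sup>2) \<in> borel_measurable M"
            using Ymeas nn T by measurable
          show "AE \<omega> in M. norm (((Y t1 \<omega> - Y s1 \<omega>) - (Y t2 \<omega> - Y s2 \<omega>))\<^sup>2)
              \<le> norm (2 * (Y t1 \<omega> - Y s1 \<omega>)\<^sup>2 + 2 * (Y t2 \<omega> - Y s2 \<omega>)\<^sup>2)"
            by (intro AE_I2) (rule sqdiff_le)
        qed
        then show ?thesis by (simp add: algebra_simps)
      qed
      fix \<omega>
      show "(Y t1 \<omega> - Y t2 \<omega> - Y s1 \<omega> + Y s2 \<omega>)\<^sup>2
          \<le> 2 * (Y t1 \<omega> - Y s1 \<omega>)\<^sup>2 + 2 * (Y t2 \<omega> - Y s2 \<omega>)\<^sup>2"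
        using sqdiff_le[of "Y t1 \<omega> - Y s1 \<omega>" "Y t2 \<omega> - Y s2 \<omega>"]
        by (simp add: algebra_simps)
    qed
    also have "\<dots> = 2 * E t1 s1 + 2 * E t2 s2"
      unfolding E_def using dint nn T by (simp add: integral_add)
    also have "\<dots> \<le> (2 * C)\<^sup>2" using A B by (simp add: power2_eq_square)
    finally have "sqrt (LINT \<omega>|M. (Y t1 \<omega> - Y t2 \<omega> - Y s1 \<omega> + Y s2 \<omega>)\<^sup>2) \<le> sqrt ((2*C)\<^sup>2)"
      by (rule real_sqrt_le_mono)
    also have "\<dots> = 2 * C" using C0 by (simp only: real_sqrt_abs)
    finally show ?thesis by (simp add: C_def mult.assoc)
  qed
  show ?thesis
    using partA partB partC
    unfolding E_def K3_def h3_def h4_def L_def by auto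
qed

end
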